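(* Let $\mathcal{G}=(V,\mathcal{E})$ be a strongly connected digraph with $n\ge3$ nodes, $P$ an irreducible Markov chain transition matrix conforming to $\mathcal{G}$, and $\tau\in\mathbb{Z}_{>0}$. Let $i\in V$ be a leaf node with unique neighbor $j\ne i$. Then for every $k\in V\setminus\{i,j\}$, $\mathbb{P}(T_{ki}\le\tau)\le\mathbb{P}(T_{ii}\le\tau)$; that is, attacking node $i$ just as the surveillance agent leaves node $i$ is not better for the intruder than attacking node $i$ while the agent is at $k$.
   Context: $P=(p_{ij})$ conforms to $\mathcal{G}$ if it is row-stochastic, nonnegative, and $p_{ij}=0$ whenever $(i,j)\notin\mathcal{E}$. A leaf node $i$ with neighbor $j$ is a node such that the only edges between $i$ and other nodes are $(i,j)$ and $(j,i)$ (a self-loop at $i$ may be present). For the Markov chain $(X_k)$ with transition matrix $P$, $T_{ij}=\min\{k\ge1:X_k=j\}$ given $X_0=i$; in particular $T_{ii}$ is the first return time to $i$. *)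

theory Defs
  imports "HOL-Analysis.Analysis"
begin

(* Node set V = {0..<n}; digraph edges E :: (nat \<times> nat) set;
   transition matrix P :: nat \<Rightarrow> nat \<Rightarrow> real (entries outside V irrelevant). *)

definition digraph_on :: "nat \<Rightarrow> (nat \<times> nat) set \<Rightarrow> bool" where
  "digraph_on n E \<longleftrightarrow> E \<subseteq> {..<n} \<times> {..<n}"

definition strongly_connected :: "nat \<Rightarrow> (nat \<times> nat) set \<Rightarrow> bool" where
  "strongly_connected n E \<longleftrightarrow> (\<forall>u<n. \<forall>v<n. (u, v) \<in> E\<^sup>*)"

definition conforms :: "nat \<Rightarrow> (nat \<times> nat) set \<Rightarrow> (nat \<Rightarrow> nat \<Rightarrow> real) \<Rightarrow> bool" where
  "conforms n E P \<longleftrightarrow>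
     (\<forall>a<n. \<forall>b<n. P a b \<ge> 0) \<and>
     (\<forall>a<n. (\<Sum>b<n. P a b) = 1) \<and>
     (\<forall>a<n. \<forall>b<n. (a, b) \<notin> E \<longrightarrow> P a b = 0)"

fun mpow :: "nat \<Rightarrow> (nat \<Rightarrow> nat \<Rightarrow> real) \<Rightarrow> nat \<Rightarrow> nat \<Rightarrow> nat \<Rightarrow> real" where
  "mpow n P 0 a b = (if a = b then 1 else 0)"
| "mpow n P (Suc m) a b = (\<Sum>c<n. mpow n P m a c * P c b)"

definition irreducible_chain :: "nat \<Rightarrow> (nat \<Rightarrow> nat \<Rightarrow> real) \<Rightarrow> bool" where
  "irreducible_chain n P \<longleftrightarrow> (\<forall>a<n. \<forall>b<n. \<exists>m. mpow n P m a b > 0)"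

(* leaf node i with neighbor j: the only edges between i and other nodes
   are (i,j) and (j,i); a self-loop at i may be present *)
definition leaf_node :: "nat \<Rightarrow> (nat \<times> nat) set \<Rightarrow> nat \<Rightarrow> nat \<Rightarrow> bool" where
  "leaf_node n E i j \<longleftrightarrow> i < n \<and> j < n \<and> j \<noteq> i \<and>
     (i, j) \<in> E \<and> (j, i) \<in> E \<and>
     (\<forall>m<n. m \<noteq> i \<longrightarrow> (((i, m) \<in> E \<or> (m, i) \<in> E) \<longrightarrow> m = j))"

definition path_prob :: "(nat \<Rightarrow> nat \<Rightarrow> real) \<Rightarrow> nat list \<Rightarrow> real" where
  "path_prob P w = (\<Prod>m < length w - 1. P (w ! m) (w ! Suc m))"

(* P(T_ki = t): sum over trajectories k = X_0, X_1, ..., X_{t-1} \<noteq> i, X_t = i *)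
definition first_hit_prob :: "nat \<Rightarrow> (nat \<Rightarrow> nat \<Rightarrow> real) \<Rightarrow> nat \<Rightarrow> nat \<Rightarrow> nat \<Rightarrow> real" where
  "first_hit_prob n P k i t =
     (if t = 0 then 0 else
       (\<Sum>xs \<in> {xs. set xs \<subseteq> {..<n} - {i} \<and> length xs = t - 1}.
           path_prob P (k # xs @ [i])))"

(* P(T_ki \<le> \<tau>), T_ki = min{t \<ge> 1. X_t = i} given X_0 = k *)
definition hit_within_prob :: "nat \<Rightarrow> (nat \<Rightarrow> nat \<Rightarrow> real) \<Rightarrow> nat \<Rightarrow> nat \<Rightarrow> nat \<Rightarrow> real" where
  "hit_within_prob n P k i \<tau> = (\<Sum>t\<in>{1..\<tau>}. first_hit_prob n P k i t)"

end

theory Submission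
  imports Defs
begin

lemma path_prob_cons2: "path_prob P (a # b # w) = P a b * path_prob P (b # w)"
proof -
  have "length (a#b#w) - 1 = Suc (length (b#w) - 1)" by simp
  then show ?thesis unfolding path_prob_def
    by (simp only: prod.lessThan_Suc_shift) simp
qed

lemma path_prob_two: "path_prob P [a, b] = P a b"
  unfolding path_prob_def by simp

lemma lists_Suc_eq:
  "{xs. set xs \<subseteq> S \<and> length xs = Suc t} = (\<lambda>(c,ys). c # ys) ` (S \<times> {ys. set ys \<subseteq> S \<and> length ys = t})"
proof (rule set_eqI)
  fix xs show "xs \<in> {xs. set xs \<subseteq> S \<and> length xs = Suc t} \<longleftrightarrow> xs \<in> (\<lambda>(c,ys). c # ys) ` (S \<times> {ys. set ys \<subseteq> S \<and> length ys = t})"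
    by (cases xs) auto
qed

lemma first_hit_SS:
  "first_hit_prob n P a i (Suc (Suc t)) = (\<Sum>c\<in>{..<n}-{i}. P a c * first_hit_prob n P c i (Suc t))"
proof -
  let ?S = "{..<n}-{i}"
  let ?B = "\<lambda>t. {xs. set xs \<subseteq> ?S \<and> length xs = t}"
  have "first_hit_prob n P a i (Suc (Suc t)) = (\<Sum>xs\<in>?B (Suc t). path_prob P (a # xs @ [i]))"
    unfolding first_hit_prob_def by simp
  also have "\<dots> = (\<Sum>xs\<in>(\<lambda>(c,ys). c # ys) ` (?S \<times> ?B t). path_prob P (a # xs @ [i]))"
    by (simp only: lists_Suc_eq)
  also have "\<dots> = (\<Sum>(c,ys)\<in>?S \<times> ?B t. path_prob P (a # c # ys @ [i]))"
    by (subst sum.reindex) (auto simp: inj_on_def intro!: sum.cong)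
  also have "\<dots> = (\<Sum>c\<in>?S. \<Sum>ys\<in>?B t. P a c * path_prob P (c # ys @ [i]))"
    by (subst sum.cartesian_product[symmetric]) (simp add: path_prob_cons2)
  also have "\<dots> = (\<Sum>c\<in>?S. P a c * first_hit_prob n P c i (Suc t))"
    unfolding first_hit_prob_def by (simp add: sum_distrib_left)
  finally show ?thesis .
qed

lemma first_hit_1: "first_hit_prob n P a i (Suc 0) = P a i"
proof -
  have "{xs. set xs \<subseteq> {..<n} - {i} \<and> length xs = 0} = {[]}" by auto
  then show ?thesis unfolding first_hit_prob_def by (simp add: path_prob_two)
qed

lemma hit_0: "hit_within_prob n P a i 0 = 0"
  unfolding hit_within_prob_def by simp

lemma hit_Suc:
  "hit_within_prob n P a i (Suc t) = P a i + (\<Sum>c\<in>{..<n}-{i}. P a c * hit_within_prob n P c i t)"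
proof -
  have "hit_within_prob n P a i (Suc t) = first_hit_prob n P a i (Suc 0) + (\<Sum>s\<in>{1..t}. first_hit_prob n P a i (Suc s))"
  proof -
    have "{1..Suc t} = insert 1 {Suc 1..Suc t}" by auto
    then have "sum (first_hit_prob n P a i) {1..Suc t} = first_hit_prob n P a i 1 + sum (first_hit_prob n P a i) {Suc 1..Suc t}"
      by simp
    also have "sum (first_hit_prob n P a i) {Suc 1..Suc t} = (\<Sum>s\<in>{1..t}. first_hit_prob n P a i (Suc s))"
      by (rule sum.shift_bounds_cl_Suc_ivl)
    finally show ?thesis unfolding hit_within_prob_def by simp
  qed
  also have "(\<Sum>s\<in>{1..t}. first_hit_prob n P a i (Suc s)) = (\<Sum>c\<in>{..<n}-{i}. P a c * hit_within_prob n P c i t)"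
  proof -
    have "(\<Sum>s\<in>{1..t}. first_hit_prob n P a i (Suc s)) = (\<Sum>s\<in>{1..t}. \<Sum>c\<in>{..<n}-{i}. P a c * first_hit_prob n P c i s)"
    proof (rule sum.cong)
      fix s assume "s \<in> {1..t}"
      then obtain r where "s = Suc r" by (cases s) auto
      then show "first_hit_prob n P a i (Suc s) = (\<Sum>c\<in>{..<n}-{i}. P a c * first_hit_prob n P c i s)"
        by (simp add: first_hit_SS)
    qed simp
    also have "\<dots> = (\<Sum>c\<in>{..<n}-{i}. P a c * hit_within_prob n P c i t)"
      unfolding hit_within_prob_def by (simp add: sum_distrib_left) (rule sum.swap)
    finally show ?thesis .
  qed
  finally show ?thesis by (simp add: first_hit_1)
qed

lemma main_aux:
  fixes n :: nat and E :: "(nat \<times> nat) set" and P :: "nat \<Rightarrow> nat \<Rightarrow> real" and i j :: nat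
  assumes conf: "conforms n E P" and leaf: "leaf_node n E i j"
  shows "\<forall>k<n. k \<noteq> i \<and> k \<noteq> j \<longrightarrow> hit_within_prob n P k i (Suc t) \<le> hit_within_prob n P i i (Suc t)"
proof -
  define H where "H = (\<lambda>t a. hit_within_prob n P a i t)"
  have HS: "H (Suc t) a = P a i + (\<Sum>c\<in>{..<n}-{i}. P a c * H t c)" for t a
    unfolding H_def by (rule hit_Suc)
  have H0: "H 0 a = 0" for a unfolding H_def by (rule hit_0)
  have nn: "\<And>a b. a < n \<Longrightarrow> b < n \<Longrightarrow> P a b \<ge> 0" using conf unfolding conforms_def by auto
  have rs: "\<And>a. a < n \<Longrightarrow> (\<Sum>b<n. P a b) = 1" using conf unfolding conforms_def by auto
  have ze: "\<And>a b. a < n \<Longrightarrow> b < n \<Longrightarrow> (a, b) \<notin> E \<Longrightarrow> P a b = 0" using conf unfolding conforms_def by auto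
  have ilt: "i < n" and jlt: "j < n" and jni: "j \<noteq> i"
    and nb: "\<And>m. m < n \<Longrightarrow> m \<noteq> i \<Longrightarrow> (i, m) \<in> E \<or> (m, i) \<in> E \<Longrightarrow> m = j"
    using leaf unfolding leaf_node_def by auto
  have Pci: "P c i = 0" if "c < n" "c \<noteq> i" "c \<noteq> j" for c
    using ze[OF that(1) ilt] nb[OF that(1,2)] that(3) by blast
  have Pic: "P i c = 0" if "c < n" "c \<noteq> i" "c \<noteq> j" for c
    using ze[OF ilt that(1)] nb[OF that(1,2)] that(3) by blast
  have split: "(\<Sum>b<n. f b) = f i + (\<Sum>b\<in>{..<n}-{i}. f b)" for f :: "nat \<Rightarrow> real"
    using ilt by (simp add: sum.remove)
  have rs': "a < n \<Longrightarrow> P a i + (\<Sum>c\<in>{..<n}-{i}. P a c) = 1" for a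
    using rs[of a] split[of "P a"] by simp
  have bnd: "\<forall>a<n. 0 \<le> H t a \<and> H t a \<le> 1" for t
  proof (induction t)
    case 0 then show ?case by (simp add: H0)
  next
    case (Suc t)
    show ?case
    proof (intro allI impI)
      fix a assume a: "a < n"
      have s0: "0 \<le> (\<Sum>c\<in>{..<n}-{i}. P a c * H t c)"
        using Suc a nn by (intro sum_nonneg) auto
      have "(\<Sum>c\<in>{..<n}-{i}. P a c * H t c) \<le> (\<Sum>c\<in>{..<n}-{i}. P a c)"
        using Suc a nn by (intro sum_mono) (simp add: mult_left_le)
      then show "0 \<le> H (Suc t) a \<and> H (Suc t) a \<le> 1"
        using s0 rs'[OF a] nn[OF a ilt] by (simp add: HS)
    qed
  qed
  have mono: "\<forall>a<n. H t a \<le> H (Suc t) a" for t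
  proof (induction t)
    case 0 then show ?case using bnd by (simp add: H0)
  next
    case (Suc t)
    show ?case
    proof (intro allI impI)
      fix a assume a: "a < n"
      have "(\<Sum>c\<in>{..<n}-{i}. P a c * H t c) \<le> (\<Sum>c\<in>{..<n}-{i}. P a c * H (Suc t) c)"
        using Suc a nn by (intro sum_mono mult_left_mono) auto
      then show "H (Suc t) a \<le> H (Suc (Suc t)) a" by (simp add: HS[of t] HS[of "Suc t"])
    qed
  qed
  have key: "\<forall>k<n. k \<noteq> i \<and> k \<noteq> j \<longrightarrow> H (Suc t) k \<le> H t j" for t
  proof (induction t)
    case 0 then show ?case by (simp add: HS H0 Pci)
  next
    case (Suc t)
    show ?case
    proof (intro allI impI)
      fix k assume k: "k < n" "k \<noteq> i \<and> k \<noteq> j"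
      have le: "H (Suc t) c \<le> H (Suc t) j" if "c \<in> {..<n}-{i}" for c
      proof (cases "c = j")
        case False
        then have "H (Suc t) c \<le> H t j" using Suc that by auto
        also have "\<dots> \<le> H (Suc t) j" using mono jlt by auto
        finally show ?thesis .
      qed simp
      have "(\<Sum>c\<in>{..<n}-{i}. P k c * H (Suc t) c) \<le> (\<Sum>c\<in>{..<n}-{i}. P k c * H (Suc t) j)"
        using le k nn by (intro sum_mono mult_left_mono) auto
      also have "\<dots> = (\<Sum>c\<in>{..<n}-{i}. P k c) * H (Suc t) j" by (simp add: sum_distrib_right)
      also have "\<dots> \<le> 1 * H (Suc t) j"
        using rs'[of k] k Pci[of k] bnd jlt by (intro mult_right_mono) auto
      finally show "H (Suc (Suc t)) k \<le> H (Suc t) j" using Pci[of k] k by (simp add: HS[of "Suc t"])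
    qed
  qed
  have sumi: "(\<Sum>c\<in>{..<n}-{i}. P i c * H t c) = P i j * H t j"
  proof -
    have "(\<Sum>c\<in>{..<n}-{i}. P i c * H t c) = P i j * H t j + (\<Sum>c\<in>{..<n}-{i}-{j}. P i c * H t c)"
      using jlt jni by (subst sum.remove[of _ j]) auto
    also have "(\<Sum>c\<in>{..<n}-{i}-{j}. P i c * H t c) = 0"
      by (intro sum.neutral) (auto simp: Pic)
    finally show ?thesis by simp
  qed
  have sumi1: "P i i + P i j = 1"
  proof -
    have "(\<Sum>c\<in>{..<n}-{i}. P i c) = P i j"
    proof -
      have "(\<Sum>c\<in>{..<n}-{i}. P i c) = P i j + (\<Sum>c\<in>{..<n}-{i}-{j}. P i c)"
        using jlt jni by (subst sum.remove[of _ j]) auto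
      also have "(\<Sum>c\<in>{..<n}-{i}-{j}. P i c) = 0"
        by (intro sum.neutral) (auto simp: Pic)
      finally show ?thesis by simp
    qed
    then show ?thesis using rs'[OF ilt] by simp
  qed
  have "H t j \<le> H (Suc t) i"
  proof -
    have "H t j = (P i i + P i j) * H t j" using sumi1 by simp
    also have "\<dots> \<le> P i i + P i j * H t j"
      using bnd jlt nn[OF ilt ilt] by (simp add: distrib_right mult_left_le)
    also have "\<dots> = H (Suc t) i" by (simp add: HS sumi)
    finally show ?thesis .
  qed
  then show ?thesis using key unfolding H_def by (meson order_trans)
qed

theorem lemma4:
  fixes n :: nat and E :: "(nat \<times> nat) set" and P :: "nat \<Rightarrow> nat \<Rightarrow> real"
    and \<tau> i j :: nat
  assumes "n \<ge> 3"
    and "digraph_on n E"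
    and "strongly_connected n E"
    and "conforms n E P"
    and "irreducible_chain n P"
    and "\<tau> > 0"
    and "leaf_node n E i j"
  shows "\<forall>k<n. k \<noteq> i \<and> k \<noteq> j \<longrightarrow> hit_within_prob n P k i \<tau> \<le> hit_within_prob n P i i \<tau>"
proof -
  obtain t where "\<tau> = Suc t" using assms(6) by (cases \<tau>) auto
  then show ?thesis using main_aux[OF assms(4) assms(7)] by simp
qed

end
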